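(* Let $\Omega\subsetneq\mathbb{C}$ be a domain and let $w\in\Omega$ be such that $\mathcal{H}^0_w(\Omega,\mathbb{D})\neq\emptyset$. Then the maximum $\max\{|h'(w)| : h\in\mathcal{H}^0_w(\Omega,\mathbb{D})\}$ exists and $$\mathscr{C}_{\Omega}^{\mathbb{D}}(w)=2\max\{|h'(w)| : h\in\mathcal{H}^0_w(\Omega,\mathbb{D})\}.$$
   Context: $\mathbb{D}=\{z\in\mathbb{C}:|z|<1\}$. For domains $\Omega\subset\mathbb{C}$, $Y\subsetneq\mathbb{C}$, and points $w\in\Omega$, $s\in Y$, let $\mathcal{H}^s_w(\Omega,Y)$ be the set of holomorphic maps $h:\Omega\to Y$ with $h(w)=s$ and $h(z)\neq s$ for all $z\in\Omega\setminus\{w\}$. For a domain $Y\subsetneq\mathbb{C}$ and $v\in Y$, the Hurwitz density is $\eta_Y(v)=2/r_Y(v)$, where $r_Y(v)=\max\{h'(0): h:\mathbb{D}\to Y \text{ holomorphic},\ h(0)=v,\ h(z)\neq v \text{ for } z\in\mathbb{D}\setminus\{0\},\ h'(0)>0\}$ (in particular $\eta_{\mathbb{D}}(0)=2$). The Carathéodory density of the Hurwitz metric of $\Omega$ relative to $Y$ at base point $s$ is $\mathscr{C}_{\Omega}^{Y,s}(w)=\sup\{\eta_Y(h(w))|h'(w)| : h\in\mathcal{H}^s_w(\Omega,Y)\}$ (defined to be $0$ if $\mathcal{H}^s_w(\Omega,Y)=\emptyset$), and $\mathscr{C}_{\Omega}^{\mathbb{D}}:=\mathscr{C}_{\Omega}^{\mathbb{D},0}$.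 *)

theory Defs
  imports "HOL-Complex_Analysis.Complex_Analysis"
begin

definition is_domain :: "complex set \<Rightarrow> bool" where
  "is_domain S \<longleftrightarrow> open S \<and> connected S \<and> S \<noteq> {}"

definition Hclass :: "complex set \<Rightarrow> complex set \<Rightarrow> complex \<Rightarrow> complex \<Rightarrow> (complex \<Rightarrow> complex) set" where
  "Hclass \<Omega> Y w s = {h. h holomorphic_on \<Omega> \<and> h ` \<Omega> \<subseteq> Y \<and> h w = s \<and>
                          (\<forall>z\<in>\<Omega> - {w}. h z \<noteq> s)}"

text \<open>Hurwitz radius r_Y(v): the extremal value of h'(0) over h in H^v_0(D,Y) with h'(0) > 0.
  The paper writes max; we take the supremum (which is the max when attained).\<close>
definition hurwitz_radius :: "complex set \<Rightarrow> complex \<Rightarrow> real" where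
  "hurwitz_radius Y v = Sup {Re (deriv h 0) | h. h \<in> Hclass (ball 0 1) Y 0 v \<and>
                               deriv h 0 \<in> \<real> \<and> Re (deriv h 0) > 0}"

definition hurwitz_density :: "complex set \<Rightarrow> complex \<Rightarrow> real" where
  "hurwitz_density Y v = 2 / hurwitz_radius Y v"

definition cara_hurwitz :: "complex set \<Rightarrow> complex set \<Rightarrow> complex \<Rightarrow> complex \<Rightarrow> real" where
  "cara_hurwitz \<Omega> Y s w =
     (if Hclass \<Omega> Y w s = {} then 0
      else Sup {hurwitz_density Y (h w) * norm (deriv h w) | h. h \<in> Hclass \<Omega> Y w s})"

end

theory Submission
  imports Defs
begin

lemma radius_disc: "hurwitz_radius (ball 0 1) 0 = 1"
proof -
  let ?A = "{Re (deriv h 0) | h. h \<in> Hclass (ball 0 1) (ball 0 1) 0 0 \<and>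
                               deriv h 0 \<in> \<real> \<and> Re (deriv h 0) > 0}"
  have "(\<lambda>z. z) \<in> Hclass (ball 0 1) (ball 0 1) 0 0"
    by (auto simp: Hclass_def)
  moreover have "deriv (\<lambda>z. z) 0 = 1" by simp
  ultimately have "1 \<in> ?A" by (metis (mono_tags, lifting) Reals_1 mem_Collect_eq one_complex.simps(1) zero_less_one)
  moreover have "x \<le> 1" if "x \<in> ?A" for x
  proof -
    from that obtain h where h: "h \<in> Hclass (ball 0 1) (ball 0 1) 0 0" and x: "x = Re (deriv h 0)" by blast
    have "norm (deriv h 0) \<le> 1"
      using h by (intro Schwarz_Lemma(2)[of h 0]) (auto simp: Hclass_def image_subset_iff)
    then show ?thesis using x complex_Re_le_cmod order_trans by blast
  qed
  ultimately have "Sup ?A = 1" by (intro cSup_eq_maximum) auto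
  then show ?thesis by (simp add: hurwitz_radius_def)
qed

lemma density_disc: "hurwitz_density (ball 0 1) 0 = 2"
  by (simp add: hurwitz_density_def radius_disc)

lemma deriv_bound:
  assumes "open \<Omega>" "cball w \<rho> \<subseteq> \<Omega>" "0 < \<rho>" "h \<in> Hclass \<Omega> (ball 0 1) w 0"
  shows "norm (deriv h w) \<le> 1 / \<rho>"
proof -
  have hol: "h holomorphic_on \<Omega>" and im: "h ` \<Omega> \<subseteq> ball 0 1" using assms(4) by (auto simp: Hclass_def)
  have "norm ((deriv ^^ 1) h w) \<le> (fact 1) * 1 / \<rho>^1"
  proof (rule Cauchy_inequality)
    show "h holomorphic_on ball w \<rho>" using hol assms(2) ball_subset_cball holomorphic_on_subset by blast
    show "continuous_on (cball w \<rho>) h" using hol assms(1,2) holomorphic_on_imp_continuous_on continuous_on_subset by blast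
    show "norm (h x) \<le> 1" if "norm (w - x) = \<rho>" for x
    proof -
      have "x \<in> \<Omega>" using that assms(2) by (auto simp: dist_norm)
      then show ?thesis using im by fastforce
    qed
  qed (use assms in auto)
  then show ?thesis by simp
qed

theorem proposition3p3:
  fixes \<Omega> :: "complex set" and w :: complex
  assumes "is_domain \<Omega>" and "\<Omega> \<noteq> UNIV" and "w \<in> \<Omega>"
    and "Hclass \<Omega> (ball 0 1) w 0 \<noteq> {}"
  shows "\<exists>m. m \<in> {norm (deriv h w) | h. h \<in> Hclass \<Omega> (ball 0 1) w 0}
            \<and> (\<forall>h \<in> Hclass \<Omega> (ball 0 1) w 0. norm (deriv h w) \<le> m)
            \<and> cara_hurwitz \<Omega> (ball 0 1) 0 w = 2 * m"
proof -
  define H where "H = Hclass \<Omega> (ball 0 1) w 0"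
  define S where "S = {norm (deriv h w) | h. h \<in> H}"
  have op: "open \<Omega>" and conn: "connected \<Omega>" using assms(1) by (auto simp: is_domain_def)
  obtain \<rho> where \<rho>: "\<rho> > 0" "cball w \<rho> \<subseteq> \<Omega>" using op assms(3) open_contains_cball by blast
  have Sne: "S \<noteq> {}" using assms(4) by (auto simp: S_def H_def)
  have Sbd: "\<And>s. s \<in> S \<Longrightarrow> s \<le> 1 / \<rho>"
    using deriv_bound[OF op \<rho>(2) \<rho>(1)] by (auto simp: S_def H_def)
  have bdd: "bdd_above S" unfolding bdd_above_def using Sbd by blast
  define M where "M = Sup S"
  have key: "\<exists>m. m \<in> S \<and> (\<forall>s\<in>S. s \<le> m)"
  proof (cases "M = 0")
    case True
    then obtain s where "s \<in> S" using Sne by blast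
    moreover have "\<forall>s\<in>S. s \<le> M" using bdd by (simp add: M_def cSup_upper)
    moreover have "s \<ge> 0" using \<open>s \<in> S\<close> by (auto simp: S_def)
    ultimately show ?thesis using True by (metis order_antisym)
  next
    case False
    have up: "\<forall>s\<in>S. s \<le> M" using bdd by (simp add: M_def cSup_upper)
    have "\<exists>h. h \<in> H \<and> M - 1 / (Suc n) < norm (deriv h w)" for n :: nat
    proof -
      have "M - 1 / Suc n < Sup S" by (simp add: M_def)
      then obtain s where "s \<in> S" "M - 1 / Suc n < s" using less_cSup_iff[OF Sne bdd] by blast
      then show ?thesis by (auto simp: S_def)
    qed
    then have "\<forall>n::nat. \<exists>h. h \<in> H \<and> M - 1 / Suc n < norm (deriv h w)" by blast
    from choice[OF this] obtain hs where "\<forall>n. hs n \<in> H \<and> M - 1 / Suc n < norm (deriv (hs n) w)"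
      by blast
    then have hs: "\<And>n. hs n \<in> H" and hsM: "\<And>n. M - 1 / Suc n < norm (deriv (hs n) w)"
      by auto
    have hsle: "norm (deriv (hs n) w) \<le> M" for n using up hs by (auto simp: S_def)
    have lim1: "(\<lambda>n. norm (deriv (hs n) w)) \<longlonglongrightarrow> M"
    proof (rule tendsto_sandwich[of "\<lambda>n. M - 1 / Suc n" _ _ "\<lambda>n. M"])
      show "\<forall>\<^sub>F n in sequentially. M - 1 / real (Suc n) \<le> norm (deriv (hs n) w)"
        by (intro always_eventually allI) (use hsM in \<open>simp add: less_imp_le\<close>)
      show "\<forall>\<^sub>F n in sequentially. norm (deriv (hs n) w) \<le> M"
        by (intro always_eventually allI) (use hsle in simp)
      have "(\<lambda>n. 1 / real (Suc n)) \<longlonglongrightarrow> 0" using LIMSEQ_Suc[OF lim_inverse_n'] by simp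
      from tendsto_diff[OF tendsto_const this, of M]
      show "(\<lambda>n. M - 1 / real (Suc n)) \<longlonglongrightarrow> M" by simp
    qed simp
    have Hhol: "\<And>h. h \<in> H \<Longrightarrow> h holomorphic_on \<Omega>" by (auto simp: H_def Hclass_def)
    have bnd: "\<exists>B. \<forall>h \<in> H. \<forall> z \<in> K. norm(h z) \<le> B" if "compact K" "K \<subseteq> \<Omega>" for K
    proof (intro exI[of _ 1] ballI)
      fix h z assume "h \<in> H" "z \<in> K"
      then have "h z \<in> ball 0 1" using that(2) by (auto simp: H_def Hclass_def image_subset_iff)
      then show "norm (h z) \<le> 1" by simp
    qed
    have rng: "range hs \<subseteq> H" using hs by auto
    obtain g r where g: "g holomorphic_on \<Omega>" "strict_mono (r :: nat \<Rightarrow> nat)"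
        and pt: "\<And>x. x \<in> \<Omega> \<Longrightarrow> ((\<lambda>n. hs (r n) x) \<longlongrightarrow> g x) sequentially"
        and ul: "\<And>K. \<lbrakk>compact K; K \<subseteq> \<Omega>\<rbrakk> \<Longrightarrow> uniform_limit K (hs \<circ> r) g sequentially"
      by (rule Montel[OF op Hhol bnd rng]) (assumption | rule that)+
    have tr: "\<not> trivial_limit (sequentially :: nat filter)" by simp
    have ulc: "uniform_limit (cball w \<rho>) (hs \<circ> r) g sequentially" using ul \<rho>(2) by simp
    have ev: "\<forall>\<^sub>F n in sequentially. continuous_on (cball w \<rho>) ((hs \<circ> r) n) \<and>
            (\<forall>x\<in>ball w \<rho>. ((hs \<circ> r) n has_field_derivative deriv ((hs \<circ> r) n) x) (at x))"
    proof (intro always_eventually allI conjI ballI)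
      fix n x
      have hh: "(hs \<circ> r) n holomorphic_on \<Omega>" using Hhol hs by simp
      show "continuous_on (cball w \<rho>) ((hs \<circ> r) n)"
        using hh \<rho>(2) holomorphic_on_imp_continuous_on continuous_on_subset by blast
      assume "x \<in> ball w \<rho>"
      then have "x \<in> \<Omega>" using \<rho>(2) by auto
      then show "((hs \<circ> r) n has_field_derivative deriv ((hs \<circ> r) n) x) (at x)"
        using hh op holomorphic_derivI by blast
    qed
    obtain g' where g': "\<And>z. z \<in> ball w \<rho> \<Longrightarrow> (g has_field_derivative (g' z)) (at z) \<and>
             ((\<lambda>n. deriv ((hs \<circ> r) n) z) \<longlongrightarrow> g' z) sequentially"
    proof -
      obtain g' where "continuous_on (cball w \<rho>) g" and d: "\<And>z. z \<in> ball w \<rho> \<Longrightarrow> (g has_field_derivative (g' z)) (at z) \<and>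
             ((\<lambda>n. deriv ((hs \<circ> r) n) z) \<longlongrightarrow> g' z) sequentially"
        by (rule has_complex_derivative_uniform_limit[OF ev ulc tr \<rho>(1)]) (assumption | rule that)+
      show ?thesis by (rule that[OF d])
    qed
    have gd: "(g has_field_derivative (g' w)) (at w)" and gl: "(\<lambda>n. deriv (hs (r n)) w) \<longlonglongrightarrow> g' w"
      using g'[of w] \<rho>(1) by (auto simp: o_def)
    have "deriv g w = g' w" using DERIV_imp_deriv[OF gd] .
    have l1: "(\<lambda>n. norm (deriv (hs (r n)) w)) \<longlonglongrightarrow> norm (g' w)" using tendsto_norm[OF gl] .
    have l2: "(\<lambda>n. norm (deriv (hs (r n)) w)) \<longlonglongrightarrow> M"
      using LIMSEQ_subseq_LIMSEQ[OF lim1 g(2)] by (simp add: o_def)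
    have normg: "norm (deriv g w) = M" using LIMSEQ_unique[OF l1 l2] \<open>deriv g w = g' w\<close> by simp
    have gw: "g w = 0"
    proof -
      have a: "(\<lambda>n. hs (r n) w) \<longlonglongrightarrow> g w" using pt[OF assms(3)] .
      have "hs (r n) w = 0" for n using hs[of "r n"] by (simp add: H_def Hclass_def)
      then have b: "(\<lambda>n. hs (r n) w) \<longlonglongrightarrow> 0" by simp
      show ?thesis using LIMSEQ_unique[OF a b] .
    qed
    have Mpos: "M > 0" using False normg norm_ge_zero[of "deriv g w"] by linarith
    have nc: "\<not> g constant_on (\<Omega> - {w})"
    proof
      assume "g constant_on (\<Omega> - {w})"
      then obtain c where c: "\<And>z. z \<in> \<Omega> - {w} \<Longrightarrow> g z = c" by (auto simp: constant_on_def)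
      have ev: "\<forall>\<^sub>F z in at w. g z = c"
        using eventually_at_in_open[OF op assms(3)] by (rule eventually_mono) (rule c)
      have "continuous_on \<Omega> g" using g(1) by (rule holomorphic_on_imp_continuous_on)
      then have "isCont g w" using continuous_on_eq_continuous_at[OF op] assms(3) by blast
      then have t1: "(g \<longlongrightarrow> g w) (at w)" by (rule isContD)
      have t2: "(g \<longlongrightarrow> c) (at w)" using tendsto_eventually[OF ev] .
      have gwc: "g w = c" using tendsto_unique[OF _ t1 t2] by simp
      have eq: "c = g z" if "z \<in> \<Omega>" for z
        using c[of z] gwc that by (cases "z = w") auto
      have d0: "((\<lambda>_. c) has_field_derivative 0) (at w)" by (rule DERIV_const)
      have "(g has_field_derivative 0) (at w)"
        using has_field_derivative_transform_within_open[OF d0 op assms(3) eq] .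
      then have "deriv g w = 0" by (rule DERIV_imp_deriv)
      then show False using normg Mpos by simp
    qed
    have conn2: "connected (\<Omega> - {w})"
      using connected_open_diff_countable[OF _ op conn, of "{w}"] by simp
    have op2: "open (\<Omega> - {w})" using op by auto
    have hol2: "(hs \<circ> r) n holomorphic_on \<Omega> - {w}" for n
      using Hhol[OF hs[of "r n"]] by (auto intro: holomorphic_on_subset)
    have gh2: "g holomorphic_on \<Omega> - {w}" using g(1) by (rule holomorphic_on_subset) auto
    have ul2: "uniform_limit K (hs \<circ> r) g sequentially" if "compact K" "K \<subseteq> \<Omega> - {w}" for K
      using ul[OF that(1)] that(2) by blast
    have nz2: "(hs \<circ> r) n z \<noteq> 0" if "z \<in> \<Omega> - {w}" for n z
      using hs[of "r n"] that by (simp add: H_def Hclass_def)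
    have nz: "g z \<noteq> 0" if "z \<in> \<Omega> - {w}" for z
      by (rule Hurwitz_no_zeros[OF op2 conn2 hol2 gh2 ul2 nc nz2 that])
    have inc: "g z \<in> cball 0 1" if "z \<in> \<Omega>" for z
    proof -
      have "(\<lambda>n. norm (hs (r n) z)) \<longlonglongrightarrow> norm (g z)" using tendsto_norm[OF pt[OF that]] .
      moreover have "\<forall>n\<ge>0. norm (hs (r n) z) \<le> 1"
      proof (intro allI impI)
        fix n :: nat
        have "hs (r n) z \<in> ball 0 1" using hs[of "r n"] that by (auto simp: H_def Hclass_def image_subset_iff)
        then show "norm (hs (r n) z) \<le> 1" by simp
      qed
      ultimately have "norm (g z) \<le> 1" by (rule Lim_bounded)
      then show ?thesis by simp
    qed
    have nc1: "\<not> g constant_on \<Omega>"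
    proof
      assume "g constant_on \<Omega>"
      then have "g constant_on (\<Omega> - {w})" by (rule constant_on_subset) auto
      then show False using nc by blast
    qed
    have opg: "open (g ` \<Omega>)" using open_mapping_thm[OF g(1) op conn op subset_refl nc1] .
    have sub: "g ` \<Omega> \<subseteq> cball 0 1" using inc by blast
    have "g ` \<Omega> \<subseteq> interior (cball 0 1)" using interior_maximal[OF sub opg] .
    then have gim: "g ` \<Omega> \<subseteq> ball 0 1" by simp
    have "g \<in> H" unfolding H_def Hclass_def using g(1) gim gw nz by blast
    then have "M \<in> S" using normg unfolding S_def by blast
    then show ?thesis using up by blast
  qed
  then obtain m where m: "m \<in> S" "\<forall>s\<in>S. s \<le> m" by blast
  have dens: "hurwitz_density (ball 0 1) (h w) = 2" if "h \<in> H" for h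
    using that by (simp add: H_def Hclass_def density_disc)
  have eqs: "{hurwitz_density (ball 0 1) (h w) * norm (deriv h w) | h. h \<in> H} = (\<lambda>s. 2 * s) ` S"
    unfolding S_def by (auto simp: dens) (metis dens)
  have "Sup ((\<lambda>s. 2 * s) ` S) = 2 * m"
    using m by (intro cSup_eq_maximum) auto
  then have cara: "cara_hurwitz \<Omega> (ball 0 1) 0 w = 2 * m"
    using assms(4) eqs by (simp add: cara_hurwitz_def H_def)
  have m2: "\<forall>h \<in> Hclass \<Omega> (ball 0 1) w 0. norm (deriv h w) \<le> m"
    using m(2) unfolding S_def H_def by blast
  have m1: "m \<in> {norm (deriv h w) | h. h \<in> Hclass \<Omega> (ball 0 1) w 0}"
    using m(1) unfolding S_def H_def .
  show ?thesis using m1 m2 cara by blast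
qed

end
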